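(* Let $L$ be a finite set of axis-aligned line segments in the plane, let $\mathcal{C}$ be the collection of associated subsets of the rectangular cells of the arrangement of $L$, let $k\ge 0$ be an integer, and let $\mathcal{C}_1$ be obtained from $\mathcal{C}$ as follows: for every pair of segments $\ell,\ell'$ that are both contained in more than $2k$ subsets of $\mathcal{C}$, add the subset $\{\ell,\ell'\}$ and remove all subsets containing both $\ell$ and $\ell'$. Then a set $L' \subset L$ with $|L'| \le k$ is a minimum-size cover of $\mathcal{C}_1$ if and only if it is a minimum-size cover of $\mathcal{C}$.
   Context: A cell of the arrangement of $L$ is a maximal connected region of the plane not intersected by any segment of $L$. A cell is rectangular if its boundary is formed by exactly four segments of $L$; its associated subset is the set of these four bounding segments. A set $L'\subseteq L$ is a cover of a collection $\mathcal{D}$ of subsets of $L$ if every member of $\mathcal{D}$ contains at least one element of $L'$ (i.e., $L'$ is a hitting set for $\mathcal{D}$). *)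

theory Defs
  imports "HOL-Analysis.Analysis"
begin

type_synonym point = "real \<times> real"

definition axis_segment :: "point set \<Rightarrow> bool" where
  "axis_segment s \<longleftrightarrow>
     (\<exists>a b. a \<noteq> b \<and> (fst a = fst b \<or> snd a = snd b) \<and> s = closed_segment a b)"

definition cells :: "point set set \<Rightarrow> point set set" where
  "cells L = components (- \<Union>L)"

text \<open>Segments forming (part of) the boundary of a cell: those sharing
  more than finitely many points (a piece of positive length) with its boundary.\<close>
definition bounding_segs :: "point set set \<Rightarrow> point set \<Rightarrow> point set set" where
  "bounding_segs L c = {s \<in> L. infinite (s \<inter> frontier c)}"

definition rectangular_cell :: "point set set \<Rightarrow> point set \<Rightarrow> bool" where
  "rectangular_cell L c \<longleftrightarrow>
     c \<in> cells L \<and> bounded c \<and> frontier c \<subseteq> \<Union>(bounding_segs L c)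
     \<and> card (bounding_segs L c) = 4"

definition cell_subsets :: "point set set \<Rightarrow> point set set set" where
  "cell_subsets L = bounding_segs L ` {c. rectangular_cell L c}"

definition is_cover :: "'a set set \<Rightarrow> 'a set \<Rightarrow> bool" where
  "is_cover D L' \<longleftrightarrow> (\<forall>S\<in>D. S \<inter> L' \<noteq> {})"

definition min_cover :: "'a set \<Rightarrow> 'a set set \<Rightarrow> 'a set \<Rightarrow> bool" where
  "min_cover L D L' \<longleftrightarrow> L' \<subseteq> L \<and> is_cover D L' \<and>
     (\<forall>M. M \<subseteq> L \<longrightarrow> is_cover D M \<longrightarrow> card L' \<le> card M)"

definition heavy_pair :: "'a set set \<Rightarrow> nat \<Rightarrow> 'a \<Rightarrow> 'a \<Rightarrow> bool" where
  "heavy_pair C k l l' \<longleftrightarrow> l \<noteq> l' \<and> card {S \<in> C. l \<in> S \<and> l' \<in> S} > 2 * k"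

definition reduce_C1 :: "'a set set \<Rightarrow> nat \<Rightarrow> 'a set set" where
  "reduce_C1 C k =
     {S \<in> C. \<not> (\<exists>l l'. heavy_pair C k l l' \<and> l \<in> S \<and> l' \<in> S)}
     \<union> {{l, l'} | l l'. heavy_pair C k l l'}"

end

theory Submission
  imports Defs
begin


definition isV :: "point set \<Rightarrow> bool" where "isV s \<longleftrightarrow> (\<exists>u. \<forall>q\<in>s. fst q = u)"
definition isH :: "point set \<Rightarrow> bool" where "isH s \<longleftrightarrow> (\<exists>u. \<forall>q\<in>s. snd q = u)"
definition xv :: "point set \<Rightarrow> real" where "xv s = fst (SOME q. q \<in> s)"
definition yh :: "point set \<Rightarrow> real" where "yh s = snd (SOME q. q \<in> s)"

lemma isV_xv: "isV s \<Longrightarrow> q \<in> s \<Longrightarrow> fst q = xv s"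
  unfolding isV_def xv_def by (metis someI)

lemma isH_yh: "isH s \<Longrightarrow> q \<in> s \<Longrightarrow> snd q = yh s"
  unfolding isH_def yh_def by (metis someI)

lemma axis_cases:
  assumes "axis_segment s"
  shows "(isV s \<and> \<not> isH s) \<or> (isH s \<and> \<not> isV s)"
proof -
  obtain a b where ab: "a \<noteq> b" "fst a = fst b \<or> snd a = snd b" "s = closed_segment a b"
    using assms unfolding axis_segment_def by blast
  have as: "a \<in> s" "b \<in> s" using ab by auto
  have nb: "\<not> (isV s \<and> isH s)"
  proof
    assume "isV s \<and> isH s"
    then have "fst a = fst b" "snd a = snd b" using as isV_xv isH_yh by metis+
    then show False using ab(1) by (simp add: prod_eq_iff)
  qed
  have "isV s \<or> isH s"
  proof (cases "fst a = fst b")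
    case True
    have "\<forall>q\<in>s. fst q = fst a"
    proof
      fix q assume "q \<in> s"
      then obtain u where "q = (1 - u) *\<^sub>R a + u *\<^sub>R b" using ab(3) in_segment(1) by blast
      then have "fst q = (1 - u) * fst a + u * fst b" by simp
      then show "fst q = fst a" using True by (simp add: algebra_simps)
    qed
    then show ?thesis unfolding isV_def by blast
  next
    case False
    then have "snd a = snd b" using ab by auto
    then have "\<forall>q\<in>s. snd q = snd a"
    proof -
      assume sn: "snd a = snd b"
      show ?thesis
      proof
        fix q assume "q \<in> s"
        then obtain u where "q = (1 - u) *\<^sub>R a + u *\<^sub>R b" using ab(3) in_segment(1) by blast
        then have "snd q = (1 - u) * snd a + u * snd b" by simp
        then show "snd q = snd a" using sn by (simp add: algebra_simps)
      qed
    qed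
    then show ?thesis unfolding isH_def by blast
  qed
  then show ?thesis using nb by blast
qed

lemma axis_closed: "axis_segment s \<Longrightarrow> closed s"
  unfolding axis_segment_def by auto

lemma generic_point:
  fixes W :: "point set"
  assumes "open W" "w \<in> W" "finite X" "finite Y"
  shows "\<exists>q\<in>W. fst q \<notin> X \<and> snd q \<notin> Y"
proof -
  obtain e where e: "e > 0" "ball w e \<subseteq> W" using assms open_contains_ball by blast
  define F where "F = (\<lambda>u. u - fst w) ` X \<union> (\<lambda>v. v - snd w) ` Y"
  have "finite F" using assms unfolding F_def by auto
  moreover have "infinite {0<..<e/2}" using e by simp
  ultimately have "infinite ({0<..<e/2} - F)" using Diff_infinite_finite by blast
  then obtain t where t: "t \<in> {0<..<e/2}" "t \<notin> F" using infinite_imp_nonempty by blast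
  define q where "q = (fst w + t, snd w + t)"
  have "dist w q = sqrt (t^2 + t^2)"
    unfolding q_def by (cases w) (simp add: dist_Pair_Pair dist_real_def)
  also have "\<dots> < e"
  proof -
    have "t * t < (e/2) * (e/2)" using t e by (intro mult_strict_mono) auto
    moreover have "t * t \<ge> 0" by simp
    ultimately have "t^2 + t^2 < e^2" unfolding power2_eq_square by linarith
    then show ?thesis using e
      by (metis abs_of_pos real_sqrt_abs real_sqrt_less_iff)
  qed
  finally have "q \<in> W" using e by auto
  moreover have "fst q \<notin> X" "snd q \<notin> Y" using t unfolding q_def F_def by force+
  ultimately show ?thesis by blast
qed

lemma unbounded_ray:
  fixes c :: "point set"
  assumes "bounded c" "\<forall>t\<ge>0. p + t *\<^sub>R d \<in> c" "d \<noteq> 0"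
  shows False
proof -
  obtain a where a: "\<forall>x\<in>c. norm x \<le> a" using assms(1) bounded_iff by blast
  define t where "t = (\<bar>a\<bar> + norm p + 1) / norm d"
  have nd: "norm d > 0" using assms(3) by simp
  have t0: "t \<ge> 0" unfolding t_def using nd by simp
  have "norm (t *\<^sub>R d) = \<bar>a\<bar> + norm p + 1" unfolding t_def using nd by simp
  moreover have "norm (t *\<^sub>R d) \<le> norm (p + t *\<^sub>R d) + norm p"
    by (metis add_diff_cancel_left' norm_triangle_ineq4 add.commute)
  moreover have "norm (p + t *\<^sub>R d) \<le> a" using a assms(2) t0 by blast
  ultimately show False by linarith
qed

lemma convex_comb_lt: "0 \<le> a \<Longrightarrow> 0 \<le> b \<Longrightarrow> a + b = 1 \<Longrightarrow> (w::real) < x \<Longrightarrow> w < y \<Longrightarrow> w < a*x + b*y"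
proof -
  assume h: "0 \<le> a" "0 \<le> b" "a + b = 1" "w < x" "w < y"
  have "a*x + b*y - w = a*(x-w) + b*(y-w)" using h(3) by (simp add: algebra_simps) (metis mult_1 h(3) distrib_right)
  moreover have "a*(x-w) + b*(y-w) > 0"
    using h by (smt (verit) mult_nonneg_nonneg mult_pos_pos)
  ultimately show ?thesis by simp
qed

lemma convex_comb_gt: "0 \<le> a \<Longrightarrow> 0 \<le> b \<Longrightarrow> a + b = 1 \<Longrightarrow> x < (w::real) \<Longrightarrow> y < w \<Longrightarrow> a*x + b*y < w"
  using convex_comb_lt[of a b "-w" "-x" "-y"] by simp


lemma open_fst_lt: "open {q::point. fst q < a}" by (intro open_Collect_less continuous_intros)
lemma open_fst_gt: "open {q::point. a < fst q}" by (intro open_Collect_less continuous_intros)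
lemma open_snd_lt: "open {q::point. snd q < a}" by (intro open_Collect_less continuous_intros)
lemma open_snd_gt: "open {q::point. a < snd q}" by (intro open_Collect_less continuous_intros)

lemma convex_Q:
  fixes XV YH :: "real set" and p :: point
  shows "convex {q::point. (\<forall>u\<in>XV. (u < fst p \<longrightarrow> u < fst q) \<and> (fst p < u \<longrightarrow> fst q < u)) \<and>
      (\<forall>v\<in>YH. (v < snd p \<longrightarrow> v < snd q) \<and> (snd p < v \<longrightarrow> snd q < v))}"
  unfolding convex_def by (auto intro!: convex_comb_lt convex_comb_gt)

lemma convex_box2: "convex {q::point. x1 < fst q \<and> fst q < x2 \<and> y1 < snd q \<and> snd q < y2}"
  unfolding convex_def by (auto intro!: convex_comb_lt convex_comb_gt)



lemma rect_box:
  assumes fin: "finite L" and ax: "\<forall>s\<in>L. axis_segment s" and rc: "rectangular_cell L c"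
  shows "\<exists>x1 x2 y1 y2. x1 < x2 \<and> y1 < y2 \<and>
     c = {q. x1 < fst q \<and> fst q < x2 \<and> y1 < snd q \<and> snd q < y2} \<and>
     xv ` {s\<in>bounding_segs L c. isV s} = {x1,x2} \<and> yh ` {s\<in>bounding_segs L c. isH s} = {y1,y2} \<and>
     inj_on xv {s\<in>bounding_segs L c. isV s} \<and> inj_on yh {s\<in>bounding_segs L c. isH s} \<and>
     card {s\<in>bounding_segs L c. isV s} = 2 \<and> card {s\<in>bounding_segs L c. isH s} = 2"
proof -
  define B where "B = bounding_segs L c"
  define BV where "BV = {s\<in>B. isV s}"
  define BH where "BH = {s\<in>B. isH s}"
  define XV where "XV = xv ` BV"
  define YH where "YH = yh ` BH"
  define G where "G = {q::point. fst q \<in> XV \<or> snd q \<in> YH}"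
  have Bsub: "B \<subseteq> L" by (auto simp: B_def bounding_segs_def)
  have cc: "c \<in> components (- \<Union>L)" and bc: "bounded c" and fr: "frontier c \<subseteq> \<Union>B"
    and c4: "card B = 4"
    using rc by (auto simp: rectangular_cell_def cells_def B_def)
  have clK: "closed (\<Union>L)" using fin ax axis_closed by blast
  have oc: "open c" using open_components[OF _ cc] clK by blast
  have finB: "finite B" using Bsub fin finite_subset by blast
  have finX: "finite XV" "finite YH" "finite BV" "finite BH"
    using finB by (auto simp: XV_def YH_def BV_def BH_def)
  have front: "frontier c \<subseteq> G"
  proof
    fix q assume "q \<in> frontier c"
    then obtain s where s: "s \<in> B" "q \<in> s" using fr by blast
    then have "axis_segment s" using Bsub ax by blast
    then have "isV s \<or> isH s" using axis_cases by blast
    then show "q \<in> G"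
    proof
      assume "isV s" then have "s \<in> BV" "fst q = xv s" using s isV_xv by (auto simp: BV_def)
      then show ?thesis by (auto simp: G_def XV_def)
    next
      assume "isH s" then have "s \<in> BH" "snd q = yh s" using s isH_yh by (auto simp: BH_def)
      then show ?thesis by (auto simp: G_def YH_def)
    qed
  qed
  have sub: "Q \<subseteq> c" if "convex Q" "Q \<inter> G = {}" "Q \<inter> c \<noteq> {}" for Q
  proof (rule ccontr)
    assume "\<not> Q \<subseteq> c"
    then have "Q \<inter> frontier c \<noteq> {}"
      using connected_Int_frontier[OF convex_connected[OF that(1)] that(3)] by blast
    then show False using front that(2) by blast
  qed
  have gen: "(\<exists>u\<in>XV. u < fst p) \<and> (\<exists>u\<in>XV. fst p < u) \<and> (\<exists>v\<in>YH. v < snd p) \<and> (\<exists>v\<in>YH. snd p < v)"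
    if p: "p \<in> c" "fst p \<notin> XV" "snd p \<notin> YH" for p
  proof -
    define Q where "Q = {q::point. (\<forall>u\<in>XV. (u < fst p \<longrightarrow> u < fst q) \<and> (fst p < u \<longrightarrow> fst q < u)) \<and>
      (\<forall>v\<in>YH. (v < snd p \<longrightarrow> v < snd q) \<and> (snd p < v \<longrightarrow> snd q < v))}"
    have cQ: "convex Q" unfolding Q_def by (rule convex_Q)
    have QG: "Q \<inter> G = {}" unfolding Q_def G_def using p by force
    have pQ: "p \<in> Q" unfolding Q_def by auto
    have Qc: "Q \<subseteq> c" using sub[OF cQ QG] pQ p by blast
    have nx: "\<And>u. u \<in> XV \<Longrightarrow> u \<noteq> fst p" "\<And>v. v \<in> YH \<Longrightarrow> v \<noteq> snd p" using p by auto
    show ?thesis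
    proof (intro conjI)
      show "\<exists>u\<in>XV. u < fst p"
      proof (rule ccontr)
        assume h: "\<not> ?thesis"
        have "\<forall>t\<ge>0. p + t *\<^sub>R (-1, 0) \<in> c"
        proof (intro allI impI)
          fix t :: real assume "t \<ge> 0"
          then have "p + t *\<^sub>R (-1, 0) \<in> Q" using h nx unfolding Q_def by (force simp: not_less)
          then show "p + t *\<^sub>R (-1, 0) \<in> c" using Qc by blast
        qed
        then show False using unbounded_ray[OF bc] by (metis prod.inject zero_prod_def zero_neq_neg_one)
      qed
      show "\<exists>u\<in>XV. fst p < u"
      proof (rule ccontr)
        assume h: "\<not> ?thesis"
        have "\<forall>t\<ge>0. p + t *\<^sub>R (1, 0) \<in> c"
        proof (intro allI impI)
          fix t :: real assume "t \<ge> 0"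
          then have "p + t *\<^sub>R (1, 0) \<in> Q" using h nx unfolding Q_def by (force simp: not_less)
          then show "p + t *\<^sub>R (1, 0) \<in> c" using Qc by blast
        qed
        then show False using unbounded_ray[OF bc] by (metis prod.inject zero_prod_def zero_neq_one)
      qed
      show "\<exists>v\<in>YH. v < snd p"
      proof (rule ccontr)
        assume h: "\<not> ?thesis"
        have "\<forall>t\<ge>0. p + t *\<^sub>R (0, -1) \<in> c"
        proof (intro allI impI)
          fix t :: real assume "t \<ge> 0"
          then have "p + t *\<^sub>R (0, -1) \<in> Q" using h nx unfolding Q_def by (force simp: not_less)
          then show "p + t *\<^sub>R (0, -1) \<in> c" using Qc by blast
        qed
        then show False using unbounded_ray[OF bc] by (metis prod.inject zero_prod_def zero_neq_neg_one)
      qed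
      show "\<exists>v\<in>YH. snd p < v"
      proof (rule ccontr)
        assume h: "\<not> ?thesis"
        have "\<forall>t\<ge>0. p + t *\<^sub>R (0, 1) \<in> c"
        proof (intro allI impI)
          fix t :: real assume "t \<ge> 0"
          then have "p + t *\<^sub>R (0, 1) \<in> Q" using h nx unfolding Q_def by (force simp: not_less)
          then show "p + t *\<^sub>R (0, 1) \<in> c" using Qc by blast
        qed
        then show False using unbounded_ray[OF bc] by (metis prod.inject zero_prod_def zero_neq_one)
      qed
    qed
  qed
  have cne: "c \<noteq> {}" using cc in_components_nonempty by blast
  then obtain p0 where "p0 \<in> c" by blast
  then obtain p where p: "p \<in> c" "fst p \<notin> XV" "snd p \<notin> YH"
    using generic_point[OF oc _ finX(1,2)] by blast
  obtain u1 u2 v1 v2 where uv: "u1 \<in> XV" "u1 < fst p" "u2 \<in> XV" "fst p < u2"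
     "v1 \<in> YH" "v1 < snd p" "v2 \<in> YH" "snd p < v2"
    using gen[OF p] by blast
  have disj: "BV \<inter> BH = {}" and un: "BV \<union> BH = B"
    using axis_cases ax Bsub by (auto simp: BV_def BH_def)
  have "card BV + card BH = 4" using card_Un_disjoint[OF finX(3,4) disj] un c4 by simp
  moreover have "card XV \<le> card BV" "card YH \<le> card BH"
    unfolding XV_def YH_def by (rule card_image_le, rule finX)+
  moreover have "card {u1,u2} \<le> card XV" "card {v1,v2} \<le> card YH"
    using card_mono[OF finX(1), of "{u1,u2}"] card_mono[OF finX(2), of "{v1,v2}"] uv by auto
  moreover have "card {u1,u2} = 2" "card {v1,v2} = 2" using uv by auto
  ultimately have cards: "card XV = 2" "card BV = 2" "card YH = 2" "card BH = 2" by linarith+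
  have XVe: "XV = {u1,u2}" using uv cards finX by (intro card_subset_eq[symmetric]) auto
  have YHe: "YH = {v1,v2}" using uv cards finX by (intro card_subset_eq[symmetric]) auto
  have injs: "inj_on xv BV" "inj_on yh BH"
    using cards finX by (auto intro!: eq_card_imp_inj_on simp: XV_def YH_def)
  define Q0 where "Q0 = {q::point. u1 < fst q \<and> fst q < u2 \<and> v1 < snd q \<and> snd q < v2}"
  have u12: "u1 < u2" "v1 < v2" using uv by auto
  have genQ0: "q \<in> Q0" if "q \<in> c" "fst q \<notin> XV" "snd q \<notin> YH" for q
    using gen[OF that] u12 unfolding XVe YHe Q0_def by auto
  have genW: "\<exists>q\<in>W. q \<in> Q0" if "open W" "w \<in> W" "W \<subseteq> c" for W w
    using generic_point[OF that(1,2) finX(1,2)] genQ0 that(3) by blast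
  have cQ0: "c \<subseteq> Q0"
  proof
    fix r assume r: "r \<in> c"
    obtain e where e: "e > 0" "ball r e \<subseteq> c" using oc r open_contains_ball by blast
    have d: "dist r (fst r + a, snd r + b) < e" if "\<bar>a\<bar> < e" "b = 0" for a b
      using that by (cases r) (simp add: dist_Pair_Pair dist_real_def)
    have d2: "dist r (fst r + a, snd r + b) < e" if "\<bar>b\<bar> < e" "a = 0" for a b
      using that by (cases r) (simp add: dist_Pair_Pair dist_real_def)
    have "u1 < fst r"
    proof (rule ccontr)
      assume "\<not> ?thesis"
      define W where "W = ball r e \<inter> {q. fst q < u1}"
      have "(fst r + -(e/2), snd r + 0) \<in> W" unfolding W_def using e \<open>\<not> u1 < fst r\<close> d[of "-(e/2)" 0] by auto
      then obtain q where "q \<in> W" "q \<in> Q0" using genW[of W] open_fst_lt e unfolding W_def by blast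
      then show False unfolding W_def Q0_def by auto
    qed
    moreover have "fst r < u2"
    proof (rule ccontr)
      assume "\<not> ?thesis"
      define W where "W = ball r e \<inter> {q. u2 < fst q}"
      have "(fst r + (e/2), snd r + 0) \<in> W" unfolding W_def using e \<open>\<not> fst r < u2\<close> d[of "e/2" 0] by auto
      then obtain q where "q \<in> W" "q \<in> Q0" using genW[of W] open_fst_gt e unfolding W_def by blast
      then show False unfolding W_def Q0_def by auto
    qed
    moreover have "v1 < snd r"
    proof (rule ccontr)
      assume "\<not> ?thesis"
      define W where "W = ball r e \<inter> {q. snd q < v1}"
      have "(fst r + 0, snd r + -(e/2)) \<in> W" unfolding W_def using e \<open>\<not> v1 < snd r\<close> d2[of "-(e/2)" 0] by auto
      then obtain q where "q \<in> W" "q \<in> Q0" using genW[of W] open_snd_lt e unfolding W_def by blast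
      then show False unfolding W_def Q0_def by auto
    qed
    moreover have "snd r < v2"
    proof (rule ccontr)
      assume "\<not> ?thesis"
      define W where "W = ball r e \<inter> {q. v2 < snd q}"
      have "(fst r + 0, snd r + (e/2)) \<in> W" unfolding W_def using e \<open>\<not> snd r < v2\<close> d2[of "e/2" 0] by auto
      then obtain q where "q \<in> W" "q \<in> Q0" using genW[of W] open_snd_gt e unfolding W_def by blast
      then show False unfolding W_def Q0_def by auto
    qed
    ultimately show "r \<in> Q0" unfolding Q0_def by auto
  qed
  have Q0c: "Q0 \<subseteq> c"
  proof (rule sub)
    show "convex Q0" unfolding Q0_def by (rule convex_box2)
    show "Q0 \<inter> G = {}" unfolding Q0_def G_def XVe YHe by auto
    show "Q0 \<inter> c \<noteq> {}" using genQ0[OF p] p by blast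
  qed
  have "c = Q0" using cQ0 Q0c by blast
  then show ?thesis
    using u12 XVe YHe injs cards
    unfolding Q0_def XV_def YH_def BV_def BH_def B_def by blast
qed



lemma ivl_share: "a1 < b1 \<Longrightarrow> a2 < b2 \<Longrightarrow> (a1 = a2 \<or> b1 = b2) \<Longrightarrow> \<exists>t::real. a1 < t \<and> t < b1 \<and> a2 < t \<and> t < b2"
proof -
  assume h: "a1 < b1" "a2 < b2" "a1 = a2 \<or> b1 = b2"
  show ?thesis
  proof (cases "a1 = a2")
    case True
    then show ?thesis using h by (intro exI[of _ "(a1 + min b1 b2)/2"]) (auto simp: min_def)
  next
    case False
    then show ?thesis using h by (intro exI[of _ "(max a1 a2 + b1)/2"]) (auto simp: max_def)
  qed
qed

lemma box_meet:
  assumes "c \<in> components S" "c' \<in> components S"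
    "c = {q. x1 < fst q \<and> fst q < x2 \<and> y1 < snd q \<and> snd q < y2}"
    "c' = {q. x1' < fst q \<and> fst q < x2' \<and> y1' < snd q \<and> snd q < y2'}"
    "x1 < t" "t < x2" "x1' < t" "t < x2'" "y1 < s" "s < y2" "y1' < s" "s < y2'"
  shows "c = c'"
proof -
  have "(t, s) \<in> c \<inter> c'" using assms by auto
  then show ?thesis using components_eq[OF assms(1,2)] by blast
qed

lemma cell_info_H:
  assumes fin: "finite L" and ax: "\<forall>s\<in>L. axis_segment s" and rc: "rectangular_cell L c"
    and ab: "a \<in> bounding_segs L c" "b \<in> bounding_segs L c" "d \<in> bounding_segs L c" "a \<noteq> b"
    "isH a" "isH b" "isV d"
  shows "\<exists>x1 x2. x1 < x2 \<and> (xv d = x1 \<or> xv d = x2) \<and> min (yh a) (yh b) < max (yh a) (yh b) \<and>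
     c = {q. x1 < fst q \<and> fst q < x2 \<and> min (yh a) (yh b) < snd q \<and> snd q < max (yh a) (yh b)}"
proof -
  obtain x1 x2 y1 y2 where r: "x1 < x2" "y1 < y2"
     "c = {q. x1 < fst q \<and> fst q < x2 \<and> y1 < snd q \<and> snd q < y2}"
     "xv ` {s\<in>bounding_segs L c. isV s} = {x1,x2}" "yh ` {s\<in>bounding_segs L c. isH s} = {y1,y2}"
     "inj_on yh {s\<in>bounding_segs L c. isH s}"
    using rect_box[OF fin ax rc] by blast
  have "xv d \<in> {x1,x2}" using r(4) ab by blast
  moreover have "yh a \<in> {y1,y2}" "yh b \<in> {y1,y2}" using r(5) ab by blast+
  moreover have "yh a \<noteq> yh b" using inj_onD[OF r(6), of a b] ab by auto
  ultimately have "xv d \<in> {x1,x2}" "min (yh a) (yh b) = y1" "max (yh a) (yh b) = y2"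
    using r(2) by (auto simp: min_def max_def)
  then show ?thesis using r by auto
qed

lemma cell_info_V:
  assumes fin: "finite L" and ax: "\<forall>s\<in>L. axis_segment s" and rc: "rectangular_cell L c"
    and ab: "a \<in> bounding_segs L c" "b \<in> bounding_segs L c" "d \<in> bounding_segs L c" "a \<noteq> b"
    "isV a" "isV b" "isH d"
  shows "\<exists>y1 y2. y1 < y2 \<and> (yh d = y1 \<or> yh d = y2) \<and> min (xv a) (xv b) < max (xv a) (xv b) \<and>
     c = {q. min (xv a) (xv b) < fst q \<and> fst q < max (xv a) (xv b) \<and> y1 < snd q \<and> snd q < y2}"
proof -
  obtain x1 x2 y1 y2 where r: "x1 < x2" "y1 < y2"
     "c = {q. x1 < fst q \<and> fst q < x2 \<and> y1 < snd q \<and> snd q < y2}"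
     "xv ` {s\<in>bounding_segs L c. isV s} = {x1,x2}" "yh ` {s\<in>bounding_segs L c. isH s} = {y1,y2}"
     "inj_on xv {s\<in>bounding_segs L c. isV s}"
    using rect_box[OF fin ax rc] by blast
  have "yh d \<in> {y1,y2}" using r(5) ab by blast
  moreover have "xv a \<in> {x1,x2}" "xv b \<in> {x1,x2}" using r(4) ab by blast+
  moreover have "xv a \<noteq> xv b" using inj_onD[OF r(6), of a b] ab by auto
  ultimately have "yh d \<in> {y1,y2}" "min (xv a) (xv b) = x1" "max (xv a) (xv b) = x2"
    using r(1) by (auto simp: min_def max_def)
  then show ?thesis using r by auto
qed

lemma rc_comp: "rectangular_cell L c \<Longrightarrow> c \<in> components (- \<Union>L)"
  by (simp add: rectangular_cell_def cells_def)

lemma core_H: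
  assumes fin: "finite L" and ax: "\<forall>s\<in>L. axis_segment s"
    and rc: "rectangular_cell L c1" "rectangular_cell L c2" "rectangular_cell L c3"
    and m1: "a \<in> bounding_segs L c1" "b \<in> bounding_segs L c1" "d \<in> bounding_segs L c1"
    and m2: "a \<in> bounding_segs L c2" "b \<in> bounding_segs L c2" "d \<in> bounding_segs L c2"
    and m3: "a \<in> bounding_segs L c3" "b \<in> bounding_segs L c3" "d \<in> bounding_segs L c3"
    and h: "a \<noteq> b" "isH a" "isH b" "isV d"
  shows "c1 = c2 \<or> c1 = c3 \<or> c2 = c3"
proof -
  define Y1 where "Y1 = min (yh a) (yh b)"
  define Y2 where "Y2 = max (yh a) (yh b)"
  obtain p1 q1 where i1: "p1 < q1" "xv d = p1 \<or> xv d = q1" "Y1 < Y2"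
     "c1 = {q. p1 < fst q \<and> fst q < q1 \<and> Y1 < snd q \<and> snd q < Y2}"
    using cell_info_H[OF fin ax rc(1) m1 h] unfolding Y1_def Y2_def by blast
  obtain p2 q2 where i2: "p2 < q2" "xv d = p2 \<or> xv d = q2"
     "c2 = {q. p2 < fst q \<and> fst q < q2 \<and> Y1 < snd q \<and> snd q < Y2}"
    using cell_info_H[OF fin ax rc(2) m2 h] unfolding Y1_def Y2_def by blast
  obtain p3 q3 where i3: "p3 < q3" "xv d = p3 \<or> xv d = q3"
     "c3 = {q. p3 < fst q \<and> fst q < q3 \<and> Y1 < snd q \<and> snd q < Y2}"
    using cell_info_H[OF fin ax rc(3) m3 h] unfolding Y1_def Y2_def by blast
  define s where "s = (Y1 + Y2) / 2"
  have s: "Y1 < s" "s < Y2" using i1(3) unfolding s_def by auto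
  have "(p1 = p2 \<or> q1 = q2) \<or> (p1 = p3 \<or> q1 = q3) \<or> (p2 = p3 \<or> q2 = q3)"
    using i1(2) i2(2) i3(2) by auto
  then consider "p1 = p2 \<or> q1 = q2" | "p1 = p3 \<or> q1 = q3" | "p2 = p3 \<or> q2 = q3" by blast
  then show ?thesis
  proof cases
    case 1
    then obtain t where "p1 < t \<and> t < q1 \<and> p2 < t \<and> t < q2" using ivl_share i1(1) i2(1) by blast
    then show ?thesis using box_meet[OF rc_comp[OF rc(1)] rc_comp[OF rc(2)] i1(4) i2(3)] s by blast
  next
    case 2
    then obtain t where "p1 < t \<and> t < q1 \<and> p3 < t \<and> t < q3" using ivl_share i1(1) i3(1) by blast
    then show ?thesis using box_meet[OF rc_comp[OF rc(1)] rc_comp[OF rc(3)] i1(4) i3(3)] s by blast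
  next
    case 3
    then obtain t where "p2 < t \<and> t < q2 \<and> p3 < t \<and> t < q3" using ivl_share i2(1) i3(1) by blast
    then show ?thesis using box_meet[OF rc_comp[OF rc(2)] rc_comp[OF rc(3)] i2(3) i3(3)] s by blast
  qed
qed

lemma core_V:
  assumes fin: "finite L" and ax: "\<forall>s\<in>L. axis_segment s"
    and rc: "rectangular_cell L c1" "rectangular_cell L c2" "rectangular_cell L c3"
    and m1: "a \<in> bounding_segs L c1" "b \<in> bounding_segs L c1" "d \<in> bounding_segs L c1"
    and m2: "a \<in> bounding_segs L c2" "b \<in> bounding_segs L c2" "d \<in> bounding_segs L c2"
    and m3: "a \<in> bounding_segs L c3" "b \<in> bounding_segs L c3" "d \<in> bounding_segs L c3"
    and h: "a \<noteq> b" "isV a" "isV b" "isH d"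
  shows "c1 = c2 \<or> c1 = c3 \<or> c2 = c3"
proof -
  define X1 where "X1 = min (xv a) (xv b)"
  define X2 where "X2 = max (xv a) (xv b)"
  obtain p1 q1 where i1: "p1 < q1" "yh d = p1 \<or> yh d = q1" "X1 < X2"
     "c1 = {q. X1 < fst q \<and> fst q < X2 \<and> p1 < snd q \<and> snd q < q1}"
    using cell_info_V[OF fin ax rc(1) m1 h] unfolding X1_def X2_def by blast
  obtain p2 q2 where i2: "p2 < q2" "yh d = p2 \<or> yh d = q2"
     "c2 = {q. X1 < fst q \<and> fst q < X2 \<and> p2 < snd q \<and> snd q < q2}"
    using cell_info_V[OF fin ax rc(2) m2 h] unfolding X1_def X2_def by blast
  obtain p3 q3 where i3: "p3 < q3" "yh d = p3 \<or> yh d = q3"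
     "c3 = {q. X1 < fst q \<and> fst q < X2 \<and> p3 < snd q \<and> snd q < q3}"
    using cell_info_V[OF fin ax rc(3) m3 h] unfolding X1_def X2_def by blast
  define s where "s = (X1 + X2) / 2"
  have s: "X1 < s" "s < X2" using i1(3) unfolding s_def by auto
  have "(p1 = p2 \<or> q1 = q2) \<or> (p1 = p3 \<or> q1 = q3) \<or> (p2 = p3 \<or> q2 = q3)"
    using i1(2) i2(2) i3(2) by auto
  then consider "p1 = p2 \<or> q1 = q2" | "p1 = p3 \<or> q1 = q3" | "p2 = p3 \<or> q2 = q3" by blast
  then show ?thesis
  proof cases
    case 1
    then obtain t where "p1 < t \<and> t < q1 \<and> p2 < t \<and> t < q2" using ivl_share i1(1) i2(1) by blast
    then show ?thesis using box_meet[OF rc_comp[OF rc(1)] rc_comp[OF rc(2)] i1(4) i2(3)] s by blast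
  next
    case 2
    then obtain t where "p1 < t \<and> t < q1 \<and> p3 < t \<and> t < q3" using ivl_share i1(1) i3(1) by blast
    then show ?thesis using box_meet[OF rc_comp[OF rc(1)] rc_comp[OF rc(3)] i1(4) i3(3)] s by blast
  next
    case 3
    then obtain t where "p2 < t \<and> t < q2 \<and> p3 < t \<and> t < q3" using ivl_share i2(1) i3(1) by blast
    then show ?thesis using box_meet[OF rc_comp[OF rc(2)] rc_comp[OF rc(3)] i2(3) i3(3)] s by blast
  qed
qed

lemma three_cells:
  assumes fin: "finite L" and ax: "\<forall>s\<in>L. axis_segment s"
    and rc: "rectangular_cell L c1" "rectangular_cell L c2" "rectangular_cell L c3"
    and m1: "l \<in> bounding_segs L c1" "l' \<in> bounding_segs L c1" "m \<in> bounding_segs L c1"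
    and m2: "l \<in> bounding_segs L c2" "l' \<in> bounding_segs L c2" "m \<in> bounding_segs L c2"
    and m3: "l \<in> bounding_segs L c3" "l' \<in> bounding_segs L c3" "m \<in> bounding_segs L c3"
    and d: "l \<noteq> l'" "l \<noteq> m" "l' \<noteq> m"
  shows "c1 = c2 \<or> c1 = c3 \<or> c2 = c3"
proof -
  have inL: "l \<in> L" "l' \<in> L" "m \<in> L" using m1 by (auto simp: bounding_segs_def)
  have ac: "isV x \<longleftrightarrow> \<not> isH x" if "x \<in> L" for x using axis_cases ax that by blast
  obtain x1 x2 y1 y2 where r: "card {s\<in>bounding_segs L c1. isV s} = 2" "card {s\<in>bounding_segs L c1. isH s} = 2"
    using rect_box[OF fin ax rc(1)] by blast
  have finB: "finite (bounding_segs L c1)" using fin by (auto simp: bounding_segs_def)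
  have c3: "card {l, l', m} = 3" using d by auto
  have nH: "\<not> (isH l \<and> isH l' \<and> isH m)"
  proof
    assume "isH l \<and> isH l' \<and> isH m"
    then have "{l,l',m} \<subseteq> {s\<in>bounding_segs L c1. isH s}" using m1 by auto
    from card_mono[OF _ this] finB r(2) c3 show False by auto
  qed
  have nV: "\<not> (isV l \<and> isV l' \<and> isV m)"
  proof
    assume "isV l \<and> isV l' \<and> isV m"
    then have "{l,l',m} \<subseteq> {s\<in>bounding_segs L c1. isV s}" using m1 by auto
    from card_mono[OF _ this] finB r(1) c3 show False by auto
  qed
  note cH = core_H[OF fin ax rc] and cV = core_V[OF fin ax rc]
  have nV': "\<not> (\<not> isH l \<and> \<not> isH l' \<and> \<not> isH m)"
    using nV ac[OF inL(1)] ac[OF inL(2)] ac[OF inL(3)] by simp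
  have acl: "isV l = (\<not> isH l)" "isV l' = (\<not> isH l')" "isV m = (\<not> isH m)" using ac inL by auto
  consider "isH l \<and> isH l' \<and> isV m" | "isH l \<and> isV l' \<and> isH m" | "isV l \<and> isH l' \<and> isH m"
    | "isV l \<and> isV l' \<and> isH m" | "isV l \<and> isH l' \<and> isV m" | "isH l \<and> isV l' \<and> isV m"
    unfolding acl using nH nV' by argo
  then show ?thesis
  proof cases
    case 1 then show ?thesis
      using cH[OF m1(1,2,3) m2(1,2,3) m3(1,2,3)] d by blast
  next
    case 2 then show ?thesis
      using cH[OF m1(1,3,2) m2(1,3,2) m3(1,3,2)] d by blast
  next
    case 3 then show ?thesis
      using cH[OF m1(2,3,1) m2(2,3,1) m3(2,3,1)] d by blast
  next
    case 4 then show ?thesis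
      using cV[OF m1(1,2,3) m2(1,2,3) m3(1,2,3)] d by blast
  next
    case 5 then show ?thesis
      using cV[OF m1(1,3,2) m2(1,3,2) m3(1,3,2)] d by blast
  next
    case 6 then show ?thesis
      using cV[OF m1(2,3,1) m2(2,3,1) m3(2,3,1)] d by blast
  qed
qed

lemma le2_of_no3:
  assumes "\<And>x y z. x \<in> A \<Longrightarrow> y \<in> A \<Longrightarrow> z \<in> A \<Longrightarrow> x = y \<or> x = z \<or> y = z"
  shows "finite A \<and> card A \<le> 2"
proof -
  have "\<exists>T. T \<subseteq> A \<and> card T = 3" if nt: "\<not> (finite A \<and> card A \<le> 2)"
  proof (cases "finite A")
    case True
    then have "3 \<le> card A" using nt by auto
    then show ?thesis using obtain_subset_with_card_n[of 3 A] by blast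
  next
    case False
    then show ?thesis using infinite_arbitrarily_large by blast
  qed
  moreover have False if TA: "T \<subseteq> A" "card T = 3" for T
  proof -
    obtain x y z where "T = {x,y,z}" "x \<noteq> y" "y \<noteq> z" "x \<noteq> z" using TA(2) unfolding card_3_iff by blast
    then have "x \<in> A" "y \<in> A" "z \<in> A" using TA(1) by auto
    then have "x = y \<or> x = z \<or> y = z" by (rule assms)
    then show False using \<open>x \<noteq> y\<close> \<open>y \<noteq> z\<close> \<open>x \<noteq> z\<close> by blast
  qed
  ultimately show ?thesis by blast
qed

lemma few_subsets:
  assumes fin: "finite L" and ax: "\<forall>s\<in>L. axis_segment s" and d: "l \<noteq> l'" "m \<noteq> l" "m \<noteq> l'"
  shows "finite {S \<in> cell_subsets L. l \<in> S \<and> l' \<in> S \<and> m \<in> S} \<and>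
         card {S \<in> cell_subsets L. l \<in> S \<and> l' \<in> S \<and> m \<in> S} \<le> 2"
proof -
  define CS where "CS = {c. rectangular_cell L c \<and> l \<in> bounding_segs L c \<and> l' \<in> bounding_segs L c \<and> m \<in> bounding_segs L c}"
  have "finite CS \<and> card CS \<le> 2"
  proof (rule le2_of_no3)
    fix x y z assume "x \<in> CS" "y \<in> CS" "z \<in> CS"
    then show "x = y \<or> x = z \<or> y = z"
      using three_cells[OF fin ax, of x y z l l' m] d unfolding CS_def by auto
  qed
  moreover have eq: "{S \<in> cell_subsets L. l \<in> S \<and> l' \<in> S \<and> m \<in> S} = bounding_segs L ` CS"
    by (auto simp: cell_subsets_def CS_def)
  ultimately show ?thesis using card_image_le[of CS "bounding_segs L"] by auto
qed

lemma hit: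
  assumes fin: "finite L" and ax: "\<forall>s\<in>L. axis_segment s" and M: "M \<subseteq> L"
    and cov: "is_cover (cell_subsets L) M" and ck: "card M \<le> k"
    and hv: "heavy_pair (cell_subsets L) k l l'"
  shows "l \<in> M \<or> l' \<in> M"
proof (rule ccontr)
  assume n: "\<not> (l \<in> M \<or> l' \<in> M)"
  define C where "C = cell_subsets L"
  define P where "P = {S \<in> C. l \<in> S \<and> l' \<in> S}"
  define A where "A = (\<lambda>m. {S \<in> C. l \<in> S \<and> l' \<in> S \<and> m \<in> S})"
  have finM: "finite M" using M fin finite_subset by blast
  have ll: "l \<noteq> l'" and big: "card P > 2 * k" using hv by (auto simp: heavy_pair_def P_def C_def)
  have PA: "P \<subseteq> (\<Union>m\<in>M. A m)"
  proof
    fix S assume "S \<in> P"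
    then have "S \<in> C" "l \<in> S" "l' \<in> S" by (auto simp: P_def)
    then obtain m where "m \<in> S" "m \<in> M" using cov by (auto simp: is_cover_def C_def)
    then show "S \<in> (\<Union>m\<in>M. A m)" using \<open>S \<in> C\<close> \<open>l \<in> S\<close> \<open>l' \<in> S\<close> by (auto simp: A_def)
  qed
  have fA: "finite (A m) \<and> card (A m) \<le> 2" if "m \<in> M" for m
    using few_subsets[OF fin ax ll, of m] that n unfolding A_def C_def by auto
  have "card P \<le> card (\<Union>m\<in>M. A m)"
    using PA fA finM by (intro card_mono) auto
  also have "\<dots> \<le> (\<Sum>m\<in>M. card (A m))" using card_UN_le[OF finM] by blast
  also have "\<dots> \<le> (\<Sum>m\<in>M. 2)" using fA by (intro sum_mono) auto
  also have "\<dots> = 2 * card M" by simp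
  also have "\<dots> \<le> 2 * k" using ck by simp
  finally show False using big by simp
qed

lemma cover_C1_C:
  assumes "is_cover (reduce_C1 C k) M"
  shows "is_cover C M"
  unfolding is_cover_def
proof
  fix S assume S: "S \<in> C"
  show "S \<inter> M \<noteq> {}"
  proof (cases "\<exists>l l'. heavy_pair C k l l' \<and> l \<in> S \<and> l' \<in> S")
    case True
    then obtain l l' where h: "heavy_pair C k l l'" "l \<in> S" "l' \<in> S" by blast
    then have "{l, l'} \<in> reduce_C1 C k" by (auto simp: reduce_C1_def)
    then have "{l, l'} \<inter> M \<noteq> {}" using assms by (auto simp: is_cover_def)
    then show ?thesis using h by auto
  next
    case False
    then have "S \<in> reduce_C1 C k" using S by (auto simp: reduce_C1_def)
    then show ?thesis using assms by (auto simp: is_cover_def)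
  qed
qed

lemma cover_C_C1:
  assumes fin: "finite L" and ax: "\<forall>s\<in>L. axis_segment s" and M: "M \<subseteq> L"
    and cov: "is_cover (cell_subsets L) M" and ck: "card M \<le> k"
  shows "is_cover (reduce_C1 (cell_subsets L) k) M"
  unfolding is_cover_def
proof
  fix S assume "S \<in> reduce_C1 (cell_subsets L) k"
  then consider "S \<in> cell_subsets L" | l l' where "heavy_pair (cell_subsets L) k l l'" "S = {l, l'}"
    by (auto simp: reduce_C1_def)
  then show "S \<inter> M \<noteq> {}"
  proof cases
    case 1 then show ?thesis using cov by (auto simp: is_cover_def)
  next
    case 2 then show ?thesis using hit[OF fin ax M cov ck] by auto
  qed
qed

theorem lemma3:
  fixes L :: "point set set" and L' :: "point set set" and k :: nat
  assumes "finite L"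
    and "\<forall>s\<in>L. axis_segment s"
    and "L' \<subseteq> L"
    and "card L' \<le> k"
  shows "min_cover L (reduce_C1 (cell_subsets L) k) L' \<longleftrightarrow> min_cover L (cell_subsets L) L'"
proof
  assume h: "min_cover L (reduce_C1 (cell_subsets L) k) L'"
  have c1: "is_cover (cell_subsets L) L'" using h cover_C1_C by (auto simp: min_cover_def)
  have "card L' \<le> card M" if "M \<subseteq> L" "is_cover (cell_subsets L) M" for M
  proof (rule ccontr)
    assume "\<not> card L' \<le> card M"
    then have "card M \<le> k" using assms(4) by simp
    then have "is_cover (reduce_C1 (cell_subsets L) k) M" using cover_C_C1[OF assms(1,2) that] by blast
    then have "card L' \<le> card M" using h that(1) by (auto simp: min_cover_def)
    then show False using \<open>\<not> card L' \<le> card M\<close> by simp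
  qed
  then show "min_cover L (cell_subsets L) L'" using c1 assms(3) by (auto simp: min_cover_def)
next
  assume h: "min_cover L (cell_subsets L) L'"
  have c1: "is_cover (reduce_C1 (cell_subsets L) k) L'"
    using h cover_C_C1[OF assms(1,2,3) _ assms(4)] by (auto simp: min_cover_def)
  have "card L' \<le> card M" if "M \<subseteq> L" "is_cover (reduce_C1 (cell_subsets L) k) M" for M
    using h that(1) cover_C1_C[OF that(2)] by (auto simp: min_cover_def)
  then show "min_cover L (reduce_C1 (cell_subsets L) k) L'" using c1 assms(3) by (auto simp: min_cover_def)
qed

end
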